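(* Let $(X,\mathcal{A},p)$ be a standard Borel probability space and let $e:(X,\mathcal{A},p)\to(X,\mathcal{A},p)$ be a measure-preserving Markov kernel that is $p$-a.s. idempotent (for all $B\in\mathcal{A}$, $\int_X e(B\mid x')\,e(dx'\mid x)=e(B\mid x)$ for $p$-a.a. $x$). Let $\mathcal{I}_e=\{B\in\mathcal{A}: e(B\mid x)=1_B(x)\text{ for }p\text{-a.a. }x\}$. Let $\pi:(X,\mathcal{A},p)\to(X,\mathcal{I}_e,p)$ be the kernel $\pi(B\mid x)=1_B(x)$ and $\pi^+:(X,\mathcal{I}_e,p)\to(X,\mathcal{A},p)$ the kernel $\pi^+(A\mid x)=\mathbb{P}[A\mid\mathcal{I}_e](x)$ (a regular version of the conditional probability). Then $\pi\circ\pi^+=\mathrm{id}_{(X,\mathcal{I}_e,p)}$ and $\pi^+\circ\pi=e$, up to almost sure equality of kernels; i.e. $((X,\mathcal{I}_e,p),\pi^+,\pi)$ splits $e$ in $\mathsf{GKrn}$.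
   Context: A Markov kernel $k$ assigns probability measures $k(\cdot\mid x)$ measurably in $x$; measure-preserving means $\int k(B\mid x)p(dx)=q(B)$; composition $(\ell\circ k)(C\mid x)=\int\ell(C\mid y)k(dy\mid x)$; two kernels are identified if for every measurable $B$ they agree $p$-a.e. $\mathsf{GKrn}$ is the category of probability spaces with these equivalence classes as morphisms. $\mathcal{I}_e$ is a $\sigma$-algebra (the invariant $\sigma$-algebra of $e$). *)

theory Defs
  imports "HOL-Probability.Probability"
begin

definition standard_borel :: "'a measure \<Rightarrow> bool" where
  "standard_borel M \<longleftrightarrow>
     (\<exists>T :: 'a topology. completely_metrizable_space T \<and> separable_space T \<and>
        space M = topspace T \<and> sets M = sigma_sets (topspace T) {U. openin T U})"

text \<open>A Markov kernel from (the measurable space of) M to N is a measurable map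
  into the space of probability measures on N; k(B|x) = measure (k x) B.\<close>
definition markov_kernel :: "'a measure \<Rightarrow> 'b measure \<Rightarrow> ('a \<Rightarrow> 'b measure) \<Rightarrow> bool" where
  "markov_kernel M N k \<longleftrightarrow> k \<in> M \<rightarrow>\<^sub>M prob_algebra N"

definition measure_preserving_kernel ::
  "'a measure \<Rightarrow> 'b measure \<Rightarrow> ('a \<Rightarrow> 'b measure) \<Rightarrow> bool" where
  "measure_preserving_kernel p q k \<longleftrightarrow> markov_kernel p q k \<and>
     (\<forall>B\<in>sets q. (\<integral>x. measure (k x) B \<partial>p) = measure q B)"

text \<open>Composition (l o k)(C|x) = integral of l(C|y) k(dy|x), i.e. the Giry-monad bind.\<close>
definition kcomp :: "('b \<Rightarrow> 'c measure) \<Rightarrow> ('a \<Rightarrow> 'b measure) \<Rightarrow> ('a \<Rightarrow> 'c measure)" where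
  "kcomp l k = (\<lambda>x. bind (k x) l)"

definition kernel_ae_eq :: "'a measure \<Rightarrow> 'b measure \<Rightarrow> ('a \<Rightarrow> 'b measure) \<Rightarrow> ('a \<Rightarrow> 'b measure) \<Rightarrow> bool" where
  "kernel_ae_eq p N k l \<longleftrightarrow> (\<forall>B\<in>sets N. AE x in p. measure (k x) B = measure (l x) B)"

definition invariant_sets :: "'a measure \<Rightarrow> ('a \<Rightarrow> 'a measure) \<Rightarrow> 'a set set" where
  "invariant_sets p e = {B\<in>sets p. AE x in p. measure (e x) B = indicator B x}"

definition invariant_space :: "'a measure \<Rightarrow> ('a \<Rightarrow> 'a measure) \<Rightarrow> 'a measure" where
  "invariant_space p e = restr_to_subalg p (sigma (space p) (invariant_sets p e))"

end

theory Submission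
  imports Defs
begin

lemma pint: "prob_space M \<Longrightarrow> AE x in M. norm (f x) \<le> B \<Longrightarrow> f \<in> borel_measurable M \<Longrightarrow> integrable M f"
  for f :: "'a \<Rightarrow> real"
  by (metis finite_measure.integrable_const_bound prob_space_def)

lemma pmeas: "prob_space M \<Longrightarrow> emeasure M A = ennreal (measure M A)"
  by (metis finite_measure.emeasure_eq_measure prob_space_def)

locale kern =
  fixes p :: "'a measure" and e :: "'a \<Rightarrow> 'a measure"
  assumes prob: "prob_space p"
    and ek: "e \<in> p \<rightarrow>\<^sub>M prob_algebra p"
    and pres: "\<forall>B\<in>sets p. (\<integral>x. measure (e x) B \<partial>p) = measure p B"
    and idem: "\<forall>B\<in>sets p. AE x in p. measure (bind (e x) e) B = measure (e x) B"
begin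

lemma esub[measurable]: "e \<in> p \<rightarrow>\<^sub>M subprob_algebra p"
  using ek by (rule measurable_prob_algebraD)

lemma ex: assumes "x \<in> space p" shows "prob_space (e x)" "sets (e x) = sets p" "space (e x) = space p"
proof -
  have "e x \<in> space (prob_algebra p)" using ek assms by (rule measurable_space)
  then show "prob_space (e x)" "sets (e x) = sets p" by (auto simp: space_prob_algebra)
  then show "space (e x) = space p" by (metis sets_eq_imp_space_eq)
qed

lemma bind_pe: "bind p e = p"
proof (rule measure_eqI)
  have ne: "space p \<noteq> {}" using prob prob_space.not_empty by blast
  show "sets (bind p e) = sets p" using ex ne by (intro sets_bind) auto
  fix A assume A: "A \<in> sets (bind p e)"
  then have A': "A \<in> sets p" using \<open>sets (bind p e) = sets p\<close> by simp
  have "emeasure (bind p e) A = (\<integral>\<^sup>+x. emeasure (e x) A \<partial>p)"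
    using ne esub A' by (rule emeasure_bind)
  also have "\<dots> = (\<integral>\<^sup>+x. ennreal (measure (e x) A) \<partial>p)"
    using ex by (intro nn_integral_cong) (simp add: pmeas)
  also have "\<dots> = ennreal (\<integral>x. measure (e x) A \<partial>p)"
  proof (rule nn_integral_eq_integral)
    interpret prob_space p by (rule prob)
    show "integrable p (\<lambda>x. measure (e x) A)"
      by (rule pint[where B=1]) (use prob A' in \<open>auto intro!: AE_I2 prob_space.prob_le_1 ex\<close>)
  qed auto
  also have "\<dots> = emeasure p A" using pres A' prob by (simp add: pmeas)
  finally show "emeasure (bind p e) A = emeasure p A" .
qed

lemma integ_e:
  fixes g :: "'a \<Rightarrow> real"
  assumes g[measurable]: "g \<in> borel_measurable p" and b: "\<And>x. x \<in> space p \<Longrightarrow> \<bar>g x\<bar> \<le> c"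
    and x: "x \<in> space p"
  shows "integrable (e x) g"
proof -
  interpret prob_space "e x" using ex x by blast
  show ?thesis
    by (rule pint[where B=c]) (use ex b x in \<open>auto simp: measurable_cong_sets[OF ex(2)[OF x] refl]\<close>)
qed

lemma stat:
  fixes g :: "'a \<Rightarrow> real"
  assumes g[measurable]: "g \<in> borel_measurable p" and b: "\<And>x. x \<in> space p \<Longrightarrow> 0 \<le> g x \<and> g x \<le> c"
  shows "(\<integral>x. (\<integral>y. g y \<partial>e x) \<partial>p) = (\<integral>x. g x \<partial>p)"
proof -
  interpret P: prob_space p by (rule prob)
  have ig: "integrable p g"
    by (rule pint[where B=c]) (use prob b in auto)
  have mi: "(\<lambda>x. \<integral>y. g y \<partial>e x) \<in> borel_measurable p"
    by measurable
  have ie: "\<And>x. x \<in> space p \<Longrightarrow> integrable (e x) g"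
    using b by (intro integ_e[where c=c]) auto
  have bi: "\<And>x. x \<in> space p \<Longrightarrow> 0 \<le> (\<integral>y. g y \<partial>e x) \<and> (\<integral>y. g y \<partial>e x) \<le> c"
  proof -
    fix x assume x: "x \<in> space p"
    interpret prob_space "e x" using ex x by blast
    have "(\<integral>y. g y \<partial>e x) \<le> (\<integral>y. c \<partial>e x)"
      using ie[OF x] b x ex by (intro integral_mono) auto
    moreover have "(\<integral>y. c \<partial>e x) = c" using prob_space ex(3)[OF x] by simp
    ultimately show "0 \<le> (\<integral>y. g y \<partial>e x) \<and> (\<integral>y. g y \<partial>e x) \<le> c"
      using b x ex by (auto intro!: integral_nonneg_AE)
  qed
  have iig: "integrable p (\<lambda>x. \<integral>y. g y \<partial>e x)"
    by (rule pint[where B=c]) (use prob bi mi in auto)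
  have "ennreal (\<integral>x. g x \<partial>p) = (\<integral>\<^sup>+x. ennreal (g x) \<partial>p)"
    using ig b by (intro nn_integral_eq_integral[symmetric]) auto
  also have "\<dots> = (\<integral>\<^sup>+x. ennreal (g x) \<partial>bind p e)" by (simp add: bind_pe)
  also have "\<dots> = (\<integral>\<^sup>+x. \<integral>\<^sup>+y. ennreal (g y) \<partial>e x \<partial>p)"
    by (rule nn_integral_bind) measurable
  also have "\<dots> = (\<integral>\<^sup>+x. ennreal (\<integral>y. g y \<partial>e x) \<partial>p)"
    using ie b ex by (intro nn_integral_cong nn_integral_eq_integral) auto
  also have "\<dots> = ennreal (\<integral>x. (\<integral>y. g y \<partial>e x) \<partial>p)"
    using iig bi by (intro nn_integral_eq_integral) auto
  finally show ?thesis
    using bi b by (subst (asm) ennreal_inj) (auto intro!: integral_nonneg_AE)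
qed

lemma fmeas[measurable]: "B \<in> sets p \<Longrightarrow> (\<lambda>x. measure (e x) B) \<in> borel_measurable p"
  by (rule measurable_compose[OF esub measurable_measure_subprob_algebra])

lemma fbound: "x \<in> space p \<Longrightarrow> 0 \<le> measure (e x) B \<and> measure (e x) B \<le> 1"
  by (metis ex prob_space.prob_le_1 measure_nonneg)

lemma bind_eq_int:
  assumes B: "B \<in> sets p" and x: "x \<in> space p"
  shows "measure (bind (e x) e) B = (\<integral>y. measure (e y) B \<partial>e x)"
proof -
  interpret E: prob_space "e x" using ex x by blast
  have ne: "space (e x) \<noteq> {}" using E.not_empty .
  have em: "e \<in> e x \<rightarrow>\<^sub>M subprob_algebra p"
    using esub measurable_cong_sets[OF ex(2)[OF x] refl] by blast
  have "emeasure (bind (e x) e) B = (\<integral>\<^sup>+y. emeasure (e y) B \<partial>e x)"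
    using ne em B by (rule emeasure_bind)
  also have "\<dots> = (\<integral>\<^sup>+y. ennreal (measure (e y) B) \<partial>e x)"
    using ex by (intro nn_integral_cong) (simp add: pmeas ex(3)[OF x])
  also have "\<dots> = ennreal (\<integral>y. measure (e y) B \<partial>e x)"
    using B fbound ex(3)[OF x] by (intro nn_integral_eq_integral integ_e[OF _ _ x, where c=1]) auto
  finally show ?thesis
    by (simp add: measure_def integral_nonneg_AE fbound ex(3)[OF x])
qed

lemma harm: "B \<in> sets p \<Longrightarrow> AE x in p. (\<integral>y. measure (e y) B \<partial>e x) = measure (e x) B"
  using idem bind_eq_int by (auto elim!: AE_mp intro!: AE_I2)

lemma const:
  assumes B: "B \<in> sets p"
  shows "AE x in p. AE y in e x. measure (e y) B = measure (e x) B"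
proof -
  interpret P: prob_space p by (rule prob)
  define f where "f x = measure (e x) B" for x
  have fm[measurable]: "f \<in> borel_measurable p" unfolding f_def using B by measurable
  have fb: "\<And>x. x \<in> space p \<Longrightarrow> 0 \<le> f x \<and> f x \<le> 1" unfolding f_def using fbound by auto
  define g2 where "g2 x = (\<integral>y. (f y)^2 \<partial>e x)" for x
  define V where "V x = (\<integral>y. (f y - f x)^2 \<partial>e x)" for x
  have g2m[measurable]: "g2 \<in> borel_measurable p" unfolding g2_def by measurable
  have ih: "AE x in p. (\<integral>y. f y \<partial>e x) = f x" using harm[OF B] unfolding f_def .
  have Veq: "AE x in p. V x = g2 x - (f x)^2"
    using ih
  proof (rule AE_mp, intro AE_I2 impI)
    fix x assume x: "x \<in> space p" and h: "(\<integral>y. f y \<partial>e x) = f x"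
    interpret E: prob_space "e x" using ex x by blast
    have i1: "integrable (e x) f" using fb x by (intro integ_e[OF fm _ x, where c=1]) auto
    have i2: "integrable (e x) (\<lambda>y. (f y)^2)" using fb x
      by (intro integ_e[OF _ _ x, where c=1]) (auto simp: power_le_one abs_square_le_1)
    have "V x = (\<integral>y. (f y)^2 - 2 * f x * f y + (f x)^2 \<partial>e x)"
      unfolding V_def by (rule Bochner_Integration.integral_cong[OF refl]) (auto simp: power2_diff algebra_simps)
    also have "\<dots> = g2 x - 2 * f x * (\<integral>y. f y \<partial>e x) + (f x)^2"
      unfolding g2_def using i1 i2 E.prob_space by (simp add: integral_diff integral_add ex(3)[OF x, symmetric])
    finally show "V x = g2 x - (f x)^2" using h by (simp add: power2_eq_square)
  qed
  have Vnn: "\<And>x. 0 \<le> V x" unfolding V_def by (rule integral_nonneg_AE) auto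
  have g2b: "\<And>x. x \<in> space p \<Longrightarrow> 0 \<le> g2 x \<and> g2 x \<le> 1"
  proof -
    fix x assume x: "x \<in> space p"
    interpret E: prob_space "e x" using ex x by blast
    have "g2 x \<le> (\<integral>y. 1 \<partial>e x)" unfolding g2_def using fb x ex(3)[OF x]
      by (intro integral_mono integ_e[OF _ _ x, where c=1]) (auto simp: power_le_one abs_square_le_1)
    then show "0 \<le> g2 x \<and> g2 x \<le> 1" unfolding g2_def using E.prob_space ex(3)[OF x]
      by (auto intro!: integral_nonneg_AE)
  qed
  have ig2: "integrable p g2" by (rule pint[OF prob, where B=1]) (use g2b in \<open>auto intro!: AE_I2\<close>)
  have if2: "integrable p (\<lambda>x. (f x)^2)"
    by (rule pint[OF prob, where B=1]) (use fb in \<open>auto intro!: AE_I2 simp: power_le_one abs_square_le_1\<close>)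
  have st: "(\<integral>x. g2 x \<partial>p) = (\<integral>x. (f x)^2 \<partial>p)"
    unfolding g2_def using fb by (intro stat[where c=1]) (auto simp: power_le_one)
  have "(\<integral>x. g2 x - (f x)^2 \<partial>p) = 0" using st ig2 if2 by simp
  moreover have "AE x in p. 0 \<le> g2 x - (f x)^2" using Veq by (rule AE_mp) (intro AE_I2, metis Vnn diff_ge_0_iff_ge)
  ultimately have "AE x in p. g2 x - (f x)^2 = 0"
    using ig2 if2 by (subst integral_nonneg_eq_0_iff_AE[symmetric]) auto
  then have "AE x in p. V x = 0" using Veq by (auto elim!: AE_mp)
  then have "AE x in p. x \<in> space p \<and> V x = 0" by auto
  then show ?thesis
  proof (rule eventually_mono)
    fix x assume "x \<in> space p \<and> V x = 0"
    then have x: "x \<in> space p" and v: "V x = 0" by auto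
    interpret E: prob_space "e x" using ex x by blast
    have i: "integrable (e x) (\<lambda>y. (f y - f x)^2)" using fb x
      by (intro integ_e[OF _ _ x, where c=1]) (auto simp: abs_square_le_1 abs_le_iff, smt (verit) fb x, smt (verit) fb x)
    have "AE y in e x. (f y - f x)^2 = 0"
      using integral_nonneg_eq_0_iff_AE[OF i] v unfolding V_def by auto
    then show "AE y in e x. measure (e y) B = measure (e x) B" unfolding f_def by (auto elim!: AE_mp)
  qed
qed

lemma ae_in:
  assumes x: "x \<in> space p" and C: "C \<in> sets p" and m: "measure (e x) C = indicator C x"
  shows "x \<in> C \<Longrightarrow> AE y in e x. y \<in> C" and "x \<notin> C \<Longrightarrow> AE y in e x. y \<notin> C"
proof -
  interpret E: prob_space "e x" using ex x by blast
  have C': "C \<in> sets (e x)" using C ex(2)[OF x] by simp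
  show "x \<in> C \<Longrightarrow> AE y in e x. y \<in> C" using E.prob_eq_1[OF C'] m by simp
  show "x \<notin> C \<Longrightarrow> AE y in e x. y \<notin> C" using E.prob_eq_0[OF C'] m by simp
qed

lemma level:
  assumes B: "B \<in> sets p"
  shows "{x\<in>space p. a < measure (e x) B} \<in> invariant_sets p e"
proof -
  define L where "L = {x\<in>space p. a < measure (e x) B}"
  have L: "L \<in> sets p" unfolding L_def using B by measurable
  have "AE x in p. x \<in> space p \<and> (AE y in e x. measure (e y) B = measure (e x) B)"
    using const[OF B] by auto
  then have "AE x in p. measure (e x) L = indicator L x"
  proof (rule eventually_mono)
    fix x assume h: "x \<in> space p \<and> (AE y in e x. measure (e y) B = measure (e x) B)"
    then have x: "x \<in> space p" by simp
    interpret E: prob_space "e x" using ex x by blast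
    have L': "L \<in> sets (e x)" using L ex(2)[OF x] by simp
    have sp: "AE y in e x. y \<in> space p" using ex(3)[OF x] by auto
    show "measure (e x) L = indicator L x"
    proof (cases "a < measure (e x) B")
      case True
      have "AE y in e x. y \<in> L" using h sp True unfolding L_def by (auto elim: AE_mp)
      then show ?thesis using E.prob_eq_1[OF L'] True x unfolding L_def by simp
    next
      case False
      have "AE y in e x. y \<notin> L" using h sp False unfolding L_def by (auto elim: AE_mp)
      then show ?thesis using E.prob_eq_0[OF L'] False x unfolding L_def by simp
    qed
  qed
  then show ?thesis using L unfolding invariant_sets_def L_def by simp
qed

lemma inv_sigma:
  assumes "C \<in> sigma_sets (space p) (invariant_sets p e)"
  shows "C \<in> invariant_sets p e"
  using assms
proof (induction rule: sigma_sets.induct)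
  case (Basic a) then show ?case .
next
  case Empty
  show ?case unfolding invariant_sets_def by simp
next
  case (Compl a)
  then have a: "a \<in> sets p" and ae: "AE x in p. measure (e x) a = indicator a x"
    unfolding invariant_sets_def by auto
  have "AE x in p. measure (e x) (space p - a) = indicator (space p - a) x"
    using ae
  proof (rule AE_mp, intro AE_I2 impI)
    fix x assume x: "x \<in> space p" and m: "measure (e x) a = indicator a x"
    interpret E: prob_space "e x" using ex x by blast
    have "measure (e x) (space p - a) = 1 - measure (e x) a"
      using E.prob_compl[of a] a ex[OF x] by simp
    then show "measure (e x) (space p - a) = indicator (space p - a) x"
      using m x by (simp split: split_indicator)
  qed
  then show ?case using a unfolding invariant_sets_def by auto
next
  case (Union A)
  then have A: "\<And>i. A i \<in> sets p" and ae: "\<And>i. AE x in p. measure (e x) (A i) = indicator (A i) x"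
    unfolding invariant_sets_def by auto
  have U: "(\<Union>i. A i) \<in> sets p" using A by auto
  have "AE x in p. \<forall>i. measure (e x) (A i) = indicator (A i) x"
    using ae by (simp add: AE_all_countable)
  then have "AE x in p. measure (e x) (\<Union>i. A i) = indicator (\<Union>i. A i) x"
  proof (rule AE_mp, intro AE_I2 impI)
    fix x assume x: "x \<in> space p" and m: "\<forall>i. measure (e x) (A i) = indicator (A i) x"
    interpret E: prob_space "e x" using ex x by blast
    have U': "(\<Union>i. A i) \<in> sets (e x)" using U ex(2)[OF x] by simp
    show "measure (e x) (\<Union>i. A i) = indicator (\<Union>i. A i) x"
    proof (cases "\<exists>i. x \<in> A i")
      case True
      then obtain i where i: "x \<in> A i" by auto
      have "AE y in e x. y \<in> A i" using ae_in(1)[OF x A m[rule_format] i] .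
      then have "AE y in e x. y \<in> (\<Union>i. A i)" by (auto elim: AE_mp)
      then show ?thesis using E.prob_eq_1[OF U'] True by simp
    next
      case False
      have "\<forall>i. AE y in e x. y \<notin> A i" using ae_in(2)[OF x A m[rule_format]] False by auto
      then have "AE y in e x. y \<notin> (\<Union>i. A i)" by (simp add: AE_all_countable[symmetric])
      then show ?thesis using E.prob_eq_0[OF U'] False by simp
    qed
  qed
  then show ?case using U unfolding invariant_sets_def by auto
qed

lemma setint:
  assumes C: "C \<in> invariant_sets p e" and B: "B \<in> sets p"
  shows "(\<integral>x\<in>C. measure (e x) B \<partial>p) = measure p (C \<inter> B)"
proof -
  have C1: "C \<in> sets p" and ae: "AE x in p. measure (e x) C = indicator C x"
    using C unfolding invariant_sets_def by auto
  have CB: "C \<inter> B \<in> sets p" using C1 B by auto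
  have "AE x in p. indicator C x *\<^sub>R measure (e x) B = measure (e x) (C \<inter> B)"
    using ae
  proof (rule AE_mp, intro AE_I2 impI)
    fix x assume x: "x \<in> space p" and m: "measure (e x) C = indicator C x"
    have B': "B \<in> sets (e x)" "C \<inter> B \<in> sets (e x)" using B CB ex(2)[OF x] by auto
    show "indicator C x *\<^sub>R measure (e x) B = measure (e x) (C \<inter> B)"
    proof (cases "x \<in> C")
      case True
      have "measure (e x) B = measure (e x) (C \<inter> B)"
        using ae_in(1)[OF x C1 m True] B' by (intro measure_eq_AE) (auto elim: AE_mp)
      then show ?thesis using True by simp
    next
      case False
      have "measure (e x) (C \<inter> B) = measure (e x) {}"
        using ae_in(2)[OF x C1 m False] B' by (intro measure_eq_AE) (auto elim: AE_mp)
      then show ?thesis using False by simp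
    qed
  qed
  then have "(\<integral>x\<in>C. measure (e x) B \<partial>p) = (\<integral>x. measure (e x) (C \<inter> B) \<partial>p)"
    unfolding set_lebesgue_integral_def using C1 B CB by (intro integral_cong_AE) auto
  also have "\<dots> = measure p (C \<inter> B)" using pres CB by auto
  finally show ?thesis .
qed

end

theorem theorem4p6:
  fixes p :: "'a measure" and e :: "'a \<Rightarrow> 'a measure" and \<pi>p :: "'a \<Rightarrow> 'a measure"
  defines "F \<equiv> invariant_space p e"
  defines "\<pi> \<equiv> (\<lambda>x. return F x)"
  assumes "prob_space p"
    and "standard_borel p"
    and "measure_preserving_kernel p p e"
    and "kernel_ae_eq p p (kcomp e e) e"
    and "measure_preserving_kernel F p \<pi>p"
    and "\<forall>A\<in>sets p. AE x in p. measure (\<pi>p x) A = real_cond_exp p F (indicator A) x"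
  shows "kernel_ae_eq F F (kcomp \<pi> \<pi>p) (return F) \<and> kernel_ae_eq p p (kcomp \<pi>p \<pi>) e"
proof -
  have ek: "e \<in> p \<rightarrow>\<^sub>M prob_algebra p" and pres: "\<forall>B\<in>sets p. (\<integral>x. measure (e x) B \<partial>p) = measure p B"
    using assms(5) unfolding measure_preserving_kernel_def markov_kernel_def by auto
  have idem: "\<forall>B\<in>sets p. AE x in p. measure (bind (e x) e) B = measure (e x) B"
    using assms(6) unfolding kernel_ae_eq_def kcomp_def by auto
  interpret K: kern p e using assms(3) ek pres idem by (rule kern.intro)
  interpret P: prob_space p by (rule assms(3))
  define S where "S = sigma (space p) (invariant_sets p e)"
  have Isub: "invariant_sets p e \<subseteq> Pow (space p)"
    using sets.sets_into_space by (auto simp: invariant_sets_def)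
  have Isub2: "invariant_sets p e \<subseteq> sets p" by (auto simp: invariant_sets_def)
  have sS: "sets S = sigma_sets (space p) (invariant_sets p e)"
    unfolding S_def using Isub by simp
  have spS: "space S = space p" unfolding S_def using Isub by simp
  have subS: "subalgebra p S" unfolding subalgebra_def using spS sS sets.sigma_sets_subset[OF Isub2] by simp
  have F_eq: "F = restr_to_subalg p S" unfolding F_def invariant_space_def S_def ..
  have sF: "sets F = sets S" unfolding F_eq using subS by (rule sets_restr_to_subalg)
  have spF: "space F = space p" unfolding F_eq by (rule space_restr_to_subalg)
  have subF: "subalgebra p F" unfolding subalgebra_def using sF spF subS by (simp add: subalgebra_def)
  interpret C: finite_measure_subalgebra p F
    using subF by unfold_locales
  have pk: "\<pi>p \<in> F \<rightarrow>\<^sub>M prob_algebra p"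
    using assms(7) unfolding measure_preserving_kernel_def markov_kernel_def by auto
  have pkS: "\<pi>p \<in> S \<rightarrow>\<^sub>M prob_algebra p" using pk measurable_cong_sets[OF sF refl] by blast
  have pksub: "\<pi>p \<in> F \<rightarrow>\<^sub>M subprob_algebra p" using pk by (rule measurable_prob_algebraD)
  have pix: "\<And>x. x \<in> space F \<Longrightarrow> prob_space (\<pi>p x) \<and> sets (\<pi>p x) = sets p"
    using measurable_space[OF pk] by (auto simp: space_prob_algebra)
  have hyp: "\<forall>A\<in>sets p. AE x in p. measure (\<pi>p x) A = real_cond_exp p F (indicator A) x"
    by (rule assms(8))
  have partA: "kernel_ae_eq F F (kcomp \<pi> \<pi>p) (return F)"
    unfolding kernel_ae_eq_def
  proof
    fix B assume BF: "B \<in> sets F"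
    then have BS: "B \<in> sets S" using sF by simp
    have Bp: "B \<in> sets p" using subF BF unfolding subalgebra_def by auto
    have ib: "integrable p (indicator B :: 'a \<Rightarrow> real)" by (rule pint[OF assms(3), where B=1]) (use Bp in \<open>auto intro!: AE_I2 simp: indicator_def\<close>)
    have "AE x in p. real_cond_exp p F (indicator B) x = indicator B x"
      using ib BF by (intro C.real_cond_exp_F_meas) auto
    then have ae1: "AE x in p. measure (\<pi>p x) B = indicator B x"
      using hyp Bp by (auto elim: AE_mp)
    have m1: "(\<lambda>x. measure (\<pi>p x) B) \<in> borel_measurable S"
      using measurable_compose[OF pkS measurable_measure_prob_algebra[OF Bp]] .
    have m2: "(indicator B :: 'a \<Rightarrow> real) \<in> borel_measurable S" using BS by simp
    have "AE x in restr_to_subalg p S. measure (\<pi>p x) B = indicator B x"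
      using subS ae1 by (rule AE_restr_to_subalg2) (use m1 m2 in measurable)
    then have ae2: "AE x in F. measure (\<pi>p x) B = indicator B x" unfolding F_eq .
    show "AE x in F. measure (kcomp \<pi> \<pi>p x) B = measure (return F x) B"
      using ae2
    proof (rule AE_mp, intro AE_I2 impI)
      fix x assume x: "x \<in> space F" and m: "measure (\<pi>p x) B = indicator B x"
      have px: "prob_space (\<pi>p x)" "sets (\<pi>p x) = sets p" using pix[OF x] by auto
      have spx: "space (\<pi>p x) = space p" using px(2) by (metis sets_eq_imp_space_eq)
      have ne: "space (\<pi>p x) \<noteq> {}" using px(1) prob_space.not_empty by blast
      have rm: "return F \<in> \<pi>p x \<rightarrow>\<^sub>M subprob_algebra F"
        by (rule measurable_from_subalg[OF _ return_measurable])
          (use subF px spx spF in \<open>auto simp: subalgebra_def\<close>)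
      have "emeasure (bind (\<pi>p x) (return F)) B = (\<integral>\<^sup>+y. emeasure (return F y) B \<partial>\<pi>p x)"
        using ne rm BF by (rule emeasure_bind)
      also have "\<dots> = (\<integral>\<^sup>+y. indicator B y \<partial>\<pi>p x)"
        using BF by simp
      also have "\<dots> = emeasure (\<pi>p x) B" using Bp px(2) by simp
      finally have "measure (bind (\<pi>p x) (return F)) B = measure (\<pi>p x) B"
        by (simp add: measure_def)
      then show "measure (kcomp \<pi> \<pi>p x) B = measure (return F x) B"
        using m BF unfolding kcomp_def \<pi>_def by (simp add: measure_return)
    qed
  qed
  have partB: "kernel_ae_eq p p (kcomp \<pi>p \<pi>) e"
    unfolding kernel_ae_eq_def
  proof
    fix B assume Bp: "B \<in> sets p"
    have ib: "integrable p (indicator B :: 'a \<Rightarrow> real)" by (rule pint[OF assms(3), where B=1]) (use Bp in \<open>auto intro!: AE_I2 simp: indicator_def\<close>)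
    have gS: "(\<lambda>x. measure (e x) B) \<in> borel_measurable S"
      unfolding borel_measurable_iff_greater
    proof
      fix a
      have "{x\<in>space p. a < measure (e x) B} \<in> invariant_sets p e" using K.level[OF Bp] .
      then show "{w \<in> space S. a < measure (e w) B} \<in> sets S" using spS sS by auto
    qed
    have gF: "(\<lambda>x. measure (e x) B) \<in> borel_measurable F"
      using gS measurable_cong_sets[OF sF refl] by blast
    have ig: "integrable p (\<lambda>x. measure (e x) B)"
      by (rule pint[OF assms(3), where B=1]) (use Bp K.fbound in \<open>auto intro!: AE_I2\<close>)
    have "AE x in p. real_cond_exp p F (indicator B) x = measure (e x) B"
    proof (rule C.real_cond_exp_charact)
      fix A assume AF: "A \<in> sets F"
      then have AI: "A \<in> invariant_sets p e" using sF sS K.inv_sigma by auto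
      then have Ap: "A \<in> sets p" using Isub2 by auto
      have "(\<integral>x\<in>A. indicator B x \<partial>p) = (\<integral>x. indicator (A \<inter> B) x \<partial>p)"
        unfolding set_lebesgue_integral_def
        by (rule Bochner_Integration.integral_cong[OF refl]) (simp split: split_indicator)
      also have "\<dots> = measure p (A \<inter> B)" using Ap Bp by simp
      also have "\<dots> = (\<integral>x\<in>A. measure (e x) B \<partial>p)" using K.setint[OF AI Bp] by simp
      finally show "(\<integral>x\<in>A. indicator B x \<partial>p) = (\<integral>x\<in>A. measure (e x) B \<partial>p)" .
    qed (use ib ig gF in auto)
    then have ae: "AE x in p. measure (\<pi>p x) B = measure (e x) B"
      using hyp Bp by (auto elim: AE_mp)
    show "AE x in p. measure (kcomp \<pi>p \<pi> x) B = measure (e x) B"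
      using ae
    proof (rule AE_mp, intro AE_I2 impI)
      fix x assume x: "x \<in> space p" and m: "measure (\<pi>p x) B = measure (e x) B"
      have "kcomp \<pi>p \<pi> x = \<pi>p x"
        unfolding kcomp_def \<pi>_def using pksub x spF by (simp add: bind_return)
      then show "measure (kcomp \<pi>p \<pi> x) B = measure (e x) B" using m by simp
    qed
  qed
  show ?thesis using partA partB by simp
qed

end
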